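(* Let $\mathscr{S}\subset\mathbb{Z}^2$ be a finite set defining a non-trivial quarter-plane model, let $\theta^*$ be as in the context, and assume $m=\tan\theta^*$ is irrational. Then the language $\mathcal{L}_m$ over the alphabet $\mathscr{S}$ consisting of the words (step sequences) whose associated walks from the origin lie in $\mathrm{walks}(H_{\theta^*},\mathscr{S})$ is not context-free.
   Context: $H_\theta=\{(x,y):x\sin\theta+y\cos\theta\ge0\}$; $\mathrm{walks}(C,\mathscr{S})$ is the set of walks $x_0=(0,0),x_1,\dots,x_n$ ($n\ge0$) with $x_{j+1}-x_j\in\mathscr{S}$ and all $x_i\in C$. With $h^{\mathscr{S}}_n(\theta)=|\mathrm{walks}(H_\theta,\mathscr{S},n)|$ and $\rho(\theta)^{-1}=\lim_n h^{\mathscr{S}}_n(\theta)^{1/n}$, set $\theta^*=\arg\max_{0\le\theta\le\pi/2}\rho(\theta)$. The projected steps are $\mathscr{A}(\theta)=\{i\sin\theta+j\cos\theta:(i,j)\in\mathscr{S}\}$. Non-triviality is used in the form: there exist steps whose projections $a\in\mathscr{A}(\theta^* )$, $-b\in\mathscr{A}(\theta^* )$ satisfy $a>0$, $b>0$ and $a/b$ irrational. *)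

theory Defs
  imports Complex_Main
begin

definition halfplane :: "real \<Rightarrow> (int \<times> int) set" where
  "halfplane \<theta> = {p. real_of_int (fst p) * sin \<theta> + real_of_int (snd p) * cos \<theta> \<ge> 0}"

definition walk_pos :: "(int \<times> int) list \<Rightarrow> nat \<Rightarrow> int \<times> int" where
  "walk_pos w k = ((\<Sum>i<k. fst (w ! i)), (\<Sum>i<k. snd (w ! i)))"

definition walk_in :: "(int \<times> int) set \<Rightarrow> (int \<times> int) list \<Rightarrow> bool" where
  "walk_in C w \<longleftrightarrow> (\<forall>k\<le>length w. walk_pos w k \<in> C)"

definition walks :: "(int \<times> int) set \<Rightarrow> (int \<times> int) set \<Rightarrow> (int \<times> int) list set" where
  "walks C S = {w. set w \<subseteq> S \<and> walk_in C w}"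

definition hcount :: "(int \<times> int) set \<Rightarrow> nat \<Rightarrow> real \<Rightarrow> nat" where
  "hcount S n \<theta> = card {w \<in> walks (halfplane \<theta>) S. length w = n}"

definition rho :: "(int \<times> int) set \<Rightarrow> real \<Rightarrow> real" where
  "rho S \<theta> = inverse (lim (\<lambda>n. real (hcount S n \<theta>) powr (1 / real n)))"

datatype ('n, 't) sym = NT 'n | Tm 't

definition derive1 :: "('n \<times> ('n, 't) sym list) set \<Rightarrow> ('n, 't) sym list \<Rightarrow> ('n, 't) sym list \<Rightarrow> bool" where
  "derive1 P u v \<longleftrightarrow> (\<exists>l A r \<alpha>. u = l @ [NT A] @ r \<and> (A, \<alpha>) \<in> P \<and> v = l @ \<alpha> @ r)"

definition cfg_lang :: "('n \<times> ('n, 't) sym list) set \<Rightarrow> 'n \<Rightarrow> 't list set" where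
  "cfg_lang P S0 = {w. (derive1 P)\<^sup>*\<^sup>* [NT S0] (map Tm w)}"

text \<open>A language is context-free if it is generated by a context-free grammar with
  finitely many productions (nonterminals taken from nat, which is no restriction).\<close>
definition context_free :: "'t list set \<Rightarrow> bool" where
  "context_free L \<longleftrightarrow> (\<exists>(P :: (nat \<times> (nat, 't) sym list) set) S0. finite P \<and> L = cfg_lang P S0)"

end

theory Submission
  imports Defs "HOL-Analysis.Kronecker_Approximation_Theorem"
begin


datatype ('n,'t) tree = Leaf 't | Node 'n "('n,'t) tree list"

fun troot :: "('n,'t) tree \<Rightarrow> ('n,'t) sym" where
  "troot (Leaf t) = Tm t" | "troot (Node A ts) = NT A"

fun yield :: "('n,'t) tree \<Rightarrow> 't list" where
  "yield (Leaf t) = [t]" | "yield (Node A ts) = concat (map yield ts)"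

fun wft :: "('n \<times> ('n,'t) sym list) set \<Rightarrow> ('n,'t) tree \<Rightarrow> bool" where
  "wft P (Leaf t) = True"
| "wft P (Node A ts) = ((A, map troot ts) \<in> P \<and> (\<forall>t\<in>set ts. wft P t))"

fun tsize :: "('n,'t) tree \<Rightarrow> nat" where
  "tsize (Leaf t) = 1" | "tsize (Node A ts) = Suc (sum_list (map tsize ts))"

fun height :: "('n,'t) tree \<Rightarrow> nat" where
  "height (Leaf t) = 0" | "height (Node A ts) = Suc (Max (set (0 # map height ts)))"

lemma derive1_ctx: "derive1 P u v \<Longrightarrow> derive1 P (l@u@r) (l@v@r)"
  unfolding derive1_def by (metis append_assoc)

lemma rtc_ctx: "(derive1 P)\<^sup>*\<^sup>* u v \<Longrightarrow> (derive1 P)\<^sup>*\<^sup>* (l@u@r) (l@v@r)"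
  by (induction rule: rtranclp_induct) (auto intro: rtranclp.rtrancl_into_rtrancl derive1_ctx)

lemma rtc_app: "(derive1 P)\<^sup>*\<^sup>* u u' \<Longrightarrow> (derive1 P)\<^sup>*\<^sup>* v v' \<Longrightarrow> (derive1 P)\<^sup>*\<^sup>* (u@v) (u'@v')"
proof -
  assume a: "(derive1 P)\<^sup>*\<^sup>* u u'" "(derive1 P)\<^sup>*\<^sup>* v v'"
  have "(derive1 P)\<^sup>*\<^sup>* ([]@u@v) ([]@u'@v)" using rtc_ctx[OF a(1)] .
  moreover have "(derive1 P)\<^sup>*\<^sup>* (u'@v@[]) (u'@v'@[])" using rtc_ctx[OF a(2)] .
  ultimately show ?thesis by simp
qed

lemma forest_derive:
  "(\<forall>t\<in>set ts. (derive1 P)\<^sup>*\<^sup>* [troot t] (map Tm (yield t))) \<Longrightarrow>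
   (derive1 P)\<^sup>*\<^sup>* (map troot ts) (map Tm (concat (map yield ts)))"
proof (induction ts)
  case Nil then show ?case by simp
next
  case (Cons t ts)
  then show ?case using rtc_app[of P "[troot t]" _ "map troot ts"] by simp
qed

lemma tree_derive: "wft P t \<Longrightarrow> (derive1 P)\<^sup>*\<^sup>* [troot t] (map Tm (yield t))"
proof (induction t)
  case (Leaf x) then show ?case by simp
next
  case (Node A ts)
  have "derive1 P [NT A] (map troot ts)" unfolding derive1_def
    using Node.prems by (auto intro!: exI[of _ "[]"])
  moreover have "(derive1 P)\<^sup>*\<^sup>* (map troot ts) (map Tm (concat (map yield ts)))"
    using Node by (intro forest_derive) auto
  ultimately show ?case by simp
qed

lemma deriv_forest:
  "(derive1 P)\<^sup>*\<^sup>* \<alpha> (map Tm w) \<Longrightarrow>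
   \<exists>ts. map troot ts = \<alpha> \<and> (\<forall>t\<in>set ts. wft P t) \<and> concat (map yield ts) = w"
proof (induction rule: converse_rtranclp_induct)
  case base
  show ?case by (rule exI[of _ "map Leaf w"]) (simp add: comp_def)
next
  case (step u v)
  then obtain ts where ts: "map troot ts = v" "\<forall>t\<in>set ts. wft P t" "concat (map yield ts) = w" by blast
  from step(1) obtain l A r \<beta> where u: "u = l @ [NT A] @ r" and P: "(A,\<beta>) \<in> P" and v: "v = l @ \<beta> @ r"
    unfolding derive1_def by blast
  from ts(1) v obtain ts1 ts23 where "ts = ts1 @ ts23" "map troot ts1 = l" "map troot ts23 = \<beta> @ r"
    by (metis map_eq_append_conv)
  moreover then obtain ts2 ts3 where "ts23 = ts2 @ ts3" "map troot ts2 = \<beta>" "map troot ts3 = r"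
    by (metis map_eq_append_conv)
  ultimately show ?case using ts P u
    by (intro exI[of _ "ts1 @ [Node A ts2] @ ts3"]) auto
qed

inductive occ :: "('n,'t) tree \<Rightarrow> ('n,'t) tree \<Rightarrow> 't list \<Rightarrow> 't list \<Rightarrow> bool" where
  occ_refl: "occ T T [] []"
| occ_step: "occ t S u y \<Longrightarrow> occ (Node A (ts1 @ t # ts2)) S (concat (map yield ts1) @ u) (y @ concat (map yield ts2))"

inductive pocc :: "('n,'t) tree \<Rightarrow> ('n,'t) tree \<Rightarrow> 't list \<Rightarrow> 't list \<Rightarrow> bool" where
  "occ t S u y \<Longrightarrow> pocc (Node A (ts1 @ t # ts2)) S (concat (map yield ts1) @ u) (y @ concat (map yield ts2))"

lemma pocc_occ: "pocc T S u y \<Longrightarrow> occ T S u y"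
  by (induction rule: pocc.induct) (rule occ_step)

lemma occ_yield: "occ T S u y \<Longrightarrow> yield T = u @ yield S @ y"
  by (induction rule: occ.induct) auto

lemma occ_trans: "occ T S u y \<Longrightarrow> occ S R v x \<Longrightarrow> occ T R (u@v) (x@y)"
proof (induction rule: occ.induct)
  case (occ_refl T) then show ?case by simp
next
  case (occ_step t S u y A ts1 ts2)
  then show ?case using occ.occ_step[of t R "u@v" "x@y" A ts1 ts2] by simp
qed

lemma occ_wf: "occ T S u y \<Longrightarrow> wft P T \<Longrightarrow> wft P S"
  by (induction rule: occ.induct) auto

lemma occ_size: "occ T S u y \<Longrightarrow> tsize S \<le> tsize T"
  by (induction rule: occ.induct) auto

lemma pocc_size: "pocc T S u y \<Longrightarrow> tsize S < tsize T"
  by (induction rule: pocc.induct) (auto dest: occ_size)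

lemma height_child: "t \<in> set ts \<Longrightarrow> height t < height (Node A ts)"
  by (simp add: le_imp_less_Suc)

lemma occ_height: "occ T S u y \<Longrightarrow> height S \<le> height T"
proof (induction rule: occ.induct)
  case (occ_step t S u y A ts1 ts2)
  have "t \<in> set (ts1 @ t # ts2)" by simp
  from height_child[OF this, of A] occ_step.IH show ?case by linarith
qed simp

lemma occ_deriv: "occ T S u y \<Longrightarrow> wft P T \<Longrightarrow>
   (derive1 P)\<^sup>*\<^sup>* [troot T] (map Tm u @ [troot S] @ map Tm y)"
proof (induction rule: occ.induct)
  case (occ_refl T) then show ?case by simp
next
  case (occ_step t S u y A ts1 ts2)
  have "derive1 P [NT A] (map troot ts1 @ [troot t] @ map troot ts2)" unfolding derive1_def
    using occ_step.prems by (auto intro!: exI[of _ "[]"])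
  moreover have "(derive1 P)\<^sup>*\<^sup>* (map troot ts1 @ [troot t] @ map troot ts2)
     (map Tm (concat (map yield ts1)) @ (map Tm u @ [troot S] @ map Tm y) @ map Tm (concat (map yield ts2)))"
    using occ_step tree_derive[of P]
    by (intro rtc_app forest_derive) auto
  ultimately show ?case by (simp add: converse_rtranclp_into_rtranclp)
qed

lemma occ_replace: "occ T S u y \<Longrightarrow> wft P T \<Longrightarrow> wft P S' \<Longrightarrow> troot S' = troot S \<Longrightarrow>
  \<exists>T'. wft P T' \<and> troot T' = troot T \<and> yield T' = u @ yield S' @ y \<and> tsize T' + tsize S = tsize T + tsize S'"
proof (induction rule: occ.induct)
  case (occ_refl T) then show ?case by auto
next
  case (occ_step t S u y A ts1 ts2)
  then obtain t' where t': "wft P t'" "troot t' = troot t" "yield t' = u @ yield S' @ y"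
     "tsize t' + tsize S = tsize t + tsize S'" by auto
  show ?case using occ_step.prems t'
    by (intro exI[of _ "Node A (ts1 @ t' # ts2)"]) auto
qed

lemma height_max_child: "ts \<noteq> [] \<Longrightarrow> \<exists>t\<in>set ts. Suc (height t) = height (Node A ts)"
proof -
  assume ne: "ts \<noteq> []"
  have "Max (set (0 # map height ts)) \<in> set (0 # map height ts)" by (rule Max_in) auto
  then consider "Max (set (0 # map height ts)) = 0" | t where "t \<in> set ts" "Max (set (0 # map height ts)) = height t"
    by auto
  then show ?thesis
  proof cases
    case 1
    from ne obtain t where t: "t \<in> set ts" by (cases ts) auto
    have "height t \<le> Max (set (0 # map height ts))" using t by (intro Max_ge) auto
    with 1 t show ?thesis by (intro bexI[of _ t]) auto
  qed auto
qed

lemma yield_len: "wft P T \<Longrightarrow> (\<forall>(A,\<beta>)\<in>P. length \<beta> \<le> K) \<Longrightarrow> 1 \<le> K \<Longrightarrow>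
  length (yield T) \<le> K ^ height T"
proof (induction T)
  case (Leaf x) then show ?case by simp
next
  case (Node A ts)
  define M where "M = Max (set (0 # map height ts))"
  have le: "height t \<le> M" if "t \<in> set ts" for t using that unfolding M_def by (intro Max_ge) auto
  have "length (yield (Node A ts)) = sum_list (map (\<lambda>t. length (yield t)) ts)"
    by (simp add: length_concat comp_def)
  also have "\<dots> \<le> sum_list (map (\<lambda>t. K ^ M) ts)"
  proof (rule sum_list_mono)
    fix t assume t: "t \<in> set ts"
    have "length (yield t) \<le> K ^ height t" using Node t by auto
    also have "\<dots> \<le> K ^ M" using le[OF t] Node.prems(3) by (intro power_increasing) auto
    finally show "length (yield t) \<le> K ^ M" .
  qed
  also have "\<dots> = length ts * K ^ M" by (simp add: sum_list_triv)
  also have "\<dots> \<le> K * K ^ M"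
  proof -
    have "(A, map troot ts) \<in> P" using Node.prems by simp
    then have "length ts \<le> K" using Node.prems(2) by fastforce
    then show ?thesis by simp
  qed
  finally show ?case by (simp add: M_def)
qed

lemma lemmaE: "height T > N \<Longrightarrow> \<exists>T' u y. occ T T' u y \<and> height T' = Suc N"
proof (induction T)
  case (Leaf x) then show ?case by simp
next
  case (Node A ts)
  show ?case
  proof (cases "height (Node A ts) = Suc N")
    case True then show ?thesis using occ_refl by blast
  next
    case False
    have "ts \<noteq> []"
    proof
      assume "ts = []"
      then have "height (Node A ts) = 1" by simp
      then show False using False Node.prems by linarith
    qed
    then obtain t where t: "t \<in> set ts" "Suc (height t) = height (Node A ts)"
      using height_max_child[of ts A] by blast
    have "height t > N" using False Node.prems t(2) by linarith
    then obtain T' u y where o: "occ t T' u y" and h: "height T' = Suc N" using Node.IH[OF t(1)] by blast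
    obtain ts1 ts2 where tsd: "ts = ts1 @ t # ts2" using t split_list by metis
    show ?thesis unfolding tsd using occ_step[OF o] h by blast
  qed
qed

lemma lemmaD': "wft P T \<Longrightarrow> finite NN \<Longrightarrow> fst ` P \<subseteq> NN \<Longrightarrow> Z \<subseteq> NN \<Longrightarrow> height T + card Z > card NN \<Longrightarrow>
  (\<exists>T1 u y T2 v x A. occ T T1 u y \<and> pocc T1 T2 v x \<and> troot T1 = NT A \<and> troot T2 = NT A) \<or>
  (\<exists>S u y A. occ T S u y \<and> troot S = NT A \<and> A \<in> Z)"
proof (induction T arbitrary: Z)
  case (Leaf x)
  then show ?case using card_mono[of NN Z] by simp
next
  case (Node A ts)
  have AN: "A \<in> NN" using Node.prems(1,3) by force
  show ?case
  proof (cases "A \<in> Z")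
    case True then show ?thesis using occ_refl by fastforce
  next
    case False
    have fz: "finite Z" using Node.prems(2,4) finite_subset by blast
    have cz: "card (insert A Z) = Suc (card Z)" using False fz by simp
    have ciz: "card (insert A Z) \<le> card NN" using AN Node.prems(2,4) by (intro card_mono) auto
    have tsne: "ts \<noteq> []"
    proof
      assume "ts = []"
      then have "height (Node A ts) = 1" by simp
      then show False using Node.prems(5) cz ciz by linarith
    qed
    then obtain t where t: "t \<in> set ts" "Suc (height t) = height (Node A ts)"
      using height_max_child[of ts A] by blast
    obtain ts1 ts2 where tsd: "ts = ts1 @ t # ts2" using t split_list by metis
    have hc: "height t + card (insert A Z) > card NN" using t cz Node.prems(5) by linarith
    have wt: "wft P t" using Node.prems(1) t by auto
    have zs: "insert A Z \<subseteq> NN" using AN Node.prems(4) by blast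
    have "(\<exists>T1 u y T2 v x B. occ t T1 u y \<and> pocc T1 T2 v x \<and> troot T1 = NT B \<and> troot T2 = NT B) \<or>
      (\<exists>S u y B. occ t S u y \<and> troot S = NT B \<and> B \<in> insert A Z)"
      by (rule Node.IH[OF t(1) wt Node.prems(2,3) zs hc])
    then show ?thesis
    proof
      assume "\<exists>T1 u y T2 v x B. occ t T1 u y \<and> pocc T1 T2 v x \<and> troot T1 = NT B \<and> troot T2 = NT B"
      then obtain T1 u y T2 v x B where h: "occ t T1 u y" "pocc T1 T2 v x" "troot T1 = NT B" "troot T2 = NT B" by blast
      have "occ (Node A ts) T1 (concat (map yield ts1) @ u) (y @ concat (map yield ts2))"
        unfolding tsd using h(1) by (rule occ_step)
      then show ?thesis using h(2-4) by blast
    next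
      assume "\<exists>S u y B. occ t S u y \<and> troot S = NT B \<and> B \<in> insert A Z"
      then obtain S u y B where S: "occ t S u y" "troot S = NT B" "B \<in> insert A Z" by blast
      show ?thesis
      proof (cases "B = A")
        case True
        have "pocc (Node A ts) S (concat (map yield ts1) @ u) (y @ concat (map yield ts2))"
          unfolding tsd using S(1) by (rule pocc.intros)
        moreover have "troot (Node A ts) = NT A" by simp
        ultimately have "occ (Node A ts) (Node A ts) [] [] \<and> pocc (Node A ts) S (concat (map yield ts1) @ u) (y @ concat (map yield ts2)) \<and> troot (Node A ts) = NT A \<and> troot S = NT A"
          using True S(2) occ_refl by auto
        then show ?thesis by blast
      next
        case False
        have "occ (Node A ts) S (concat (map yield ts1) @ u) (y @ concat (map yield ts2))"
          unfolding tsd using S(1) by (rule occ_step)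
        then show ?thesis using S(2,3) False by blast
      qed
    qed
  qed
qed


lemma lang_tree:
  assumes "(derive1 P)\<^sup>*\<^sup>* [NT S] (map Tm z)"
  shows "\<exists>T. wft P T \<and> troot T = NT S \<and> yield T = z"
proof -
  from deriv_forest[OF assms] obtain ts where ts: "map troot ts = [NT S] \<and> (\<forall>t\<in>set ts. wft P t) \<and> concat (map yield ts) = z" ..
  then obtain T where "ts = [T]" by (cases ts) auto
  with ts show ?thesis by auto
qed

lemma extract_pump:
  assumes wf: "wft P T" and r: "troot T = NT S0" and fin: "finite P"
    and minimal: "\<forall>T'. wft P T' \<and> troot T' = NT S0 \<and> yield T' = yield T \<longrightarrow> tsize T \<le> tsize T'"
    and K: "\<forall>(A,\<beta>)\<in>P. length \<beta> \<le> K" "1 \<le> K"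
    and len: "length (yield T) > K ^ card (fst ` P)"
  shows "\<exists>u v w x y A. yield T = u@v@w@x@y \<and> v@x \<noteq> [] \<and> length (v@x) \<le> K ^ Suc (card (fst`P)) \<and>
     (derive1 P)\<^sup>*\<^sup>* [NT S0] (map Tm u @ [NT A] @ map Tm y) \<and>
     (derive1 P)\<^sup>*\<^sup>* [NT A] (map Tm v @ [NT A] @ map Tm x) \<and>
     (derive1 P)\<^sup>*\<^sup>* [NT A] (map Tm w)"
proof -
  define N where "N = card (fst ` P)"
  have hT: "height T > N"
  proof (rule ccontr)
    assume "\<not> height T > N"
    then have "K ^ height T \<le> K ^ N" using K(2) by (intro power_increasing) auto
    moreover have "length (yield T) \<le> K ^ height T" using yield_len[OF wf K(1) K(2)] .
    ultimately show False using len unfolding N_def by linarith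
  qed
  obtain T' u0 y0 where o1: "occ T T' u0 y0" and hT': "height T' = Suc N" using lemmaE[OF hT] by blast
  have wT': "wft P T'" using occ_wf[OF o1 wf] .
  have "(\<exists>T1 u y T2 v x A. occ T' T1 u y \<and> pocc T1 T2 v x \<and> troot T1 = NT A \<and> troot T2 = NT A) \<or>
    (\<exists>S u y A. occ T' S u y \<and> troot S = NT A \<and> A \<in> {})"
    by (rule lemmaD'[OF wT', of "fst ` P" "{}"]) (use fin hT' N_def in auto)
  then have "\<exists>T1 u y T2 v x A. occ T' T1 u y \<and> pocc T1 T2 v x \<and> troot T1 = NT A \<and> troot T2 = NT A"
    by simp
  then obtain T1 u1 y1 T2 v x A where o2: "occ T' T1 u1 y1" and p3: "pocc T1 T2 v x"
    and r1: "troot T1 = NT A" and r2: "troot T2 = NT A" by blast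
  define u where "u = u0 @ u1"
  define y where "y = y1 @ y0"
  have o: "occ T T1 u y" unfolding u_def y_def by (rule occ_trans[OF o1 o2])
  have o3: "occ T1 T2 v x" using pocc_occ[OF p3] .
  have wT1: "wft P T1" using occ_wf[OF o wf] .
  have wT2: "wft P T2" using occ_wf[OF o3 wT1] .
  have yT: "yield T = u @ yield T1 @ y" using occ_yield[OF o] .
  have yT1: "yield T1 = v @ yield T2 @ x" using occ_yield[OF o3] .
  have d1: "(derive1 P)\<^sup>*\<^sup>* [NT S0] (map Tm u @ [NT A] @ map Tm y)"
    using occ_deriv[OF o wf] r r1 by simp
  have d2: "(derive1 P)\<^sup>*\<^sup>* [NT A] (map Tm v @ [NT A] @ map Tm x)"
    using occ_deriv[OF o3 wT1] r1 r2 by simp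
  have d3: "(derive1 P)\<^sup>*\<^sup>* [NT A] (map Tm (yield T2))"
    using tree_derive[OF wT2] r2 by simp
  have "length (v @ x) \<le> length (yield T1)" using yT1 by simp
  also have "\<dots> \<le> K ^ height T1" using yield_len[OF wT1 K(1) K(2)] .
  also have "\<dots> \<le> K ^ height T'" using occ_height[OF o2] K(2) by (intro power_increasing) auto
  finally have lvx: "length (v @ x) \<le> K ^ Suc N" using hT' by simp
  have ne: "v @ x \<noteq> []"
  proof
    assume vx: "v @ x = []"
    obtain T'' where T'': "wft P T''" "troot T'' = troot T" "yield T'' = u @ yield T2 @ y"
      "tsize T'' + tsize T1 = tsize T + tsize T2"
      using occ_replace[OF o wf wT2] r1 r2 by auto
    have "tsize T2 < tsize T1" using pocc_size[OF p3] .
    moreover have "yield T'' = yield T" using T''(3) yT yT1 vx by simp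
    moreover have "tsize T \<le> tsize T''" using minimal T''(1,2) r \<open>yield T'' = yield T\<close> by simp
    ultimately show False using T''(4) by linarith
  qed
  have "yield T = u@v@yield T2@x@y" using yT yT1 by simp
  then show ?thesis using d1 d2 d3 lvx ne unfolding N_def by blast
qed

lemma concat_rep_Suc: "concat (replicate (Suc i) v) = concat (replicate i v) @ v"
  by (induction i) auto

lemma concat_rep_Suc': "concat (replicate (Suc i) v) = v @ concat (replicate i v)"
  by simp

lemma pump_iter:
  assumes "(derive1 P)\<^sup>*\<^sup>* [NT A] (map Tm v @ [NT A] @ map Tm x)"
  shows "(derive1 P)\<^sup>*\<^sup>* [NT A] (map Tm (concat (replicate i v)) @ [NT A] @ map Tm (concat (replicate i x)))"
proof (induction i)
  case 0 then show ?case by simp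
next
  case (Suc i)
  have c: "(derive1 P)\<^sup>*\<^sup>* (map Tm (concat (replicate i v)) @ [NT A] @ map Tm (concat (replicate i x)))
     (map Tm (concat (replicate i v)) @ (map Tm v @ [NT A] @ map Tm x) @ map Tm (concat (replicate i x)))"
    using rtc_ctx[OF assms, of "map Tm (concat (replicate i v))" "map Tm (concat (replicate i x))"] .
  have e: "map Tm (concat (replicate i v)) @ (map Tm v @ [NT A] @ map Tm x) @ map Tm (concat (replicate i x))
    = map Tm (concat (replicate (Suc i) v)) @ [NT A] @ map Tm (concat (replicate (Suc i) x))"
    by (simp only: concat_rep_Suc[of i v] concat_rep_Suc'[of i x] map_append append_assoc)
  have c2: "(derive1 P)\<^sup>*\<^sup>* (map Tm (concat (replicate i v)) @ [NT A] @ map Tm (concat (replicate i x)))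
     (map Tm (concat (replicate (Suc i) v)) @ [NT A] @ map Tm (concat (replicate (Suc i) x)))"
    using c unfolding e .
  show ?case by (rule rtranclp_trans[OF Suc.IH c2])
qed

lemma cf_pumping:
  fixes L :: "'t list set"
  assumes "context_free L"
  shows "\<exists>p. \<forall>z\<in>L. length z > p \<longrightarrow> (\<exists>u v w x y. z = u@v@w@x@y \<and> v@x \<noteq> [] \<and> length (v@x) \<le> p \<and>
     (\<forall>i. u @ concat (replicate i v) @ w @ concat (replicate i x) @ y \<in> L))"
proof -
  obtain P :: "(nat \<times> (nat, 't) sym list) set" and S0 where fin: "finite P" and L: "L = cfg_lang P S0"
    using assms unfolding context_free_def by blast
  define K where "K = Suc (\<Sum>(A,\<beta>)\<in>P. length \<beta>)"
  have K1: "\<forall>(A,\<beta>)\<in>P. length \<beta> \<le> K"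
  proof (clarify)
    fix A \<beta> assume "(A, \<beta>) \<in> P"
    then have "length \<beta> \<le> (\<Sum>(A,\<beta>)\<in>P. length \<beta>)"
      using member_le_sum[of "(A,\<beta>)" P "\<lambda>(A,\<beta>). length \<beta>"] fin by auto
    then show "length \<beta> \<le> K" unfolding K_def by simp
  qed
  have K2: "1 \<le> K" unfolding K_def by simp
  define p where "p = K ^ Suc (card (fst ` P))"
  have pp: "K ^ card (fst ` P) \<le> p" unfolding p_def using K2 by (intro power_increasing) auto
  have "\<forall>z\<in>L. length z > p \<longrightarrow> (\<exists>u v w x y. z = u@v@w@x@y \<and> v@x \<noteq> [] \<and> length (v@x) \<le> p \<and>
     (\<forall>i. u @ concat (replicate i v) @ w @ concat (replicate i x) @ y \<in> L))"
  proof (intro ballI impI)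
    fix z assume zL: "z \<in> L" and lz: "length z > p"
    then have "(derive1 P)\<^sup>*\<^sup>* [NT S0] (map Tm z)" unfolding L cfg_lang_def by simp
    from lang_tree[OF this] obtain T0 where T0: "wft P T0 \<and> troot T0 = NT S0 \<and> yield T0 = z" by blast
    obtain T where T: "wft P T \<and> troot T = NT S0 \<and> yield T = z"
       and Tmin: "\<forall>T'. wft P T' \<and> troot T' = NT S0 \<and> yield T' = z \<longrightarrow> tsize T \<le> tsize T'"
      using ex_has_least_nat[of "\<lambda>T. wft P T \<and> troot T = NT S0 \<and> yield T = z" T0 tsize] T0 by blast
    have "\<exists>u v w x y A. yield T = u@v@w@x@y \<and> v@x \<noteq> [] \<and> length (v@x) \<le> K ^ Suc (card (fst`P)) \<and>
     (derive1 P)\<^sup>*\<^sup>* [NT S0] (map Tm u @ [NT A] @ map Tm y) \<and>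
     (derive1 P)\<^sup>*\<^sup>* [NT A] (map Tm v @ [NT A] @ map Tm x) \<and>
     (derive1 P)\<^sup>*\<^sup>* [NT A] (map Tm w)"
      using T Tmin lz pp by (intro extract_pump[OF _ _ fin _ K1 K2]) auto
    then obtain u v w x y A where dec: "yield T = u@v@w@x@y" "v@x \<noteq> []" "length (v@x) \<le> p"
      and d1: "(derive1 P)\<^sup>*\<^sup>* [NT S0] (map Tm u @ [NT A] @ map Tm y)"
      and d2: "(derive1 P)\<^sup>*\<^sup>* [NT A] (map Tm v @ [NT A] @ map Tm x)"
      and d3: "(derive1 P)\<^sup>*\<^sup>* [NT A] (map Tm w)" unfolding p_def by blast
    have "u @ concat (replicate i v) @ w @ concat (replicate i x) @ y \<in> L" for i
    proof -
      have "(derive1 P)\<^sup>*\<^sup>* (map Tm u @ [NT A] @ map Tm y)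
        (map Tm u @ (map Tm (concat (replicate i v)) @ [NT A] @ map Tm (concat (replicate i x))) @ map Tm y)"
        by (rule rtc_ctx[OF pump_iter[OF d2]])
      moreover have "(derive1 P)\<^sup>*\<^sup>* (map Tm u @ map Tm (concat (replicate i v)) @ [NT A] @ map Tm (concat (replicate i x)) @ map Tm y)
        ((map Tm u @ map Tm (concat (replicate i v))) @ map Tm w @ (map Tm (concat (replicate i x)) @ map Tm y))"
        using rtc_ctx[OF d3, of "map Tm u @ map Tm (concat (replicate i v))" "map Tm (concat (replicate i x)) @ map Tm y"]
        by simp
      ultimately have "(derive1 P)\<^sup>*\<^sup>* [NT S0] (map Tm (u @ concat (replicate i v) @ w @ concat (replicate i x) @ y))"
        using d1 by (simp add: rtranclp_trans)
      then show ?thesis unfolding L cfg_lang_def by simp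
    qed
    then show "\<exists>u v w x y. z = u@v@w@x@y \<and> v@x \<noteq> [] \<and> length (v@x) \<le> p \<and>
     (\<forall>i. u @ concat (replicate i v) @ w @ concat (replicate i x) @ y \<in> L)"
      using dec T by blast
  qed
  then show ?thesis by blast
qed



definition pr :: "real \<Rightarrow> int \<times> int \<Rightarrow> real" where
  "pr \<theta> p = of_int (fst p) * sin \<theta> + of_int (snd p) * cos \<theta>"

definition proj :: "real \<Rightarrow> (int \<times> int) list \<Rightarrow> real" where
  "proj \<theta> w = sum_list (map (pr \<theta>) w)"

lemma proj_simps[simp]: "proj \<theta> [] = 0" "proj \<theta> (a # w) = pr \<theta> a + proj \<theta> w"
  "proj \<theta> (w1 @ w2) = proj \<theta> w1 + proj \<theta> w2"
  by (auto simp: proj_def)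

lemma proj_rep: "proj \<theta> (concat (replicate i v)) = real i * proj \<theta> v"
  by (induction i) (auto simp: algebra_simps)

lemma proj_replicate: "proj \<theta> (replicate i a) = real i * pr \<theta> a"
  by (induction i) (auto simp: algebra_simps)

lemma walk_pos_take: "k \<le> length w \<Longrightarrow>
  walk_pos w k = (sum_list (map fst (take k w)), sum_list (map snd (take k w)))"
  unfolding walk_pos_def
  by (simp add: sum_list_sum_nth lessThan_atLeast0 min_absorb1)

lemma pr_sum: "of_int (sum_list (map fst w)) * sin \<theta> + of_int (sum_list (map snd w)) * cos \<theta> = proj \<theta> w"
  by (induction w) (auto simp: pr_def algebra_simps)

lemma pos_in_iff: "k \<le> length w \<Longrightarrow> walk_pos w k \<in> halfplane \<theta> \<longleftrightarrow> proj \<theta> (take k w) \<ge> 0"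
proof -
  assume k: "k \<le> length w"
  have "walk_pos w k \<in> halfplane \<theta> \<longleftrightarrow>
    of_int (sum_list (map fst (take k w))) * sin \<theta> + of_int (sum_list (map snd (take k w))) * cos \<theta> \<ge> 0"
    unfolding walk_pos_take[OF k] halfplane_def by simp
  then show ?thesis unfolding pr_sum .
qed

lemma walk_in_iff: "walk_in (halfplane \<theta>) w \<longleftrightarrow> (\<forall>k \<le> length w. proj \<theta> (take k w) \<ge> 0)"
  unfolding walk_in_def using pos_in_iff by blast

lemma L_end: "w \<in> walks (halfplane \<theta>) S \<Longrightarrow> proj \<theta> w \<ge> 0"
proof -
  assume "w \<in> walks (halfplane \<theta>) S"
  then have "\<forall>k \<le> length w. proj \<theta> (take k w) \<ge> 0" unfolding walks_def walk_in_iff by blast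
  then have "proj \<theta> (take (length w) w) \<ge> 0" by blast
  then show ?thesis by simp
qed

lemma proj_count: "set w \<subseteq> {A, B} \<Longrightarrow> A \<noteq> B \<Longrightarrow>
  proj \<theta> w = real (count_list w A) * pr \<theta> A + real (count_list w B) * pr \<theta> B \<and>
  length w = count_list w A + count_list w B"
  by (induction w) (auto simp: algebra_simps)

lemma density:
  fixes a b \<epsilon> :: real
  assumes a: "a > 0" and b: "b > 0" and irr: "a / b \<notin> \<rat>" and e: "\<epsilon> > 0"
  shows "\<exists>n m :: nat. 0 < real n * a - real m * b \<and> real n * a - real m * b < \<epsilon>"
proof -
  define \<eta> where "\<eta> = min (\<epsilon> / b) 1"
  have \<eta>: "0 < \<eta>" "\<eta> \<le> 1" "\<eta> \<le> \<epsilon> / b" using e b by (auto simp: \<eta>_def)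
  obtain k :: nat where "k > 0" and k: "\<bar>frac (real k * (a / b)) - \<eta> / 2\<bar> < \<eta> / 2"
    using Kronecker_approx_1_explicit[OF irr, of "\<eta> / 2" "\<eta> / 2"] \<eta> by auto
  define f where "f = frac (real k * (a / b))"
  have kk: "\<bar>f - \<eta> / 2\<bar> < \<eta> / 2" using k unfolding f_def .
  have f: "0 < f" "f < \<eta>" using kk by arith+
  define m where "m = nat \<lfloor>real k * (a / b)\<rfloor>"
  have "real k * (a / b) \<ge> 0" using a b by simp
  then have m: "real m = real k * (a / b) - f" unfolding m_def f_def frac_def by simp
  have eq: "real k * a - real m * b = b * f" using m b by (simp add: field_simps)
  have "b * f < b * (\<epsilon> / b)" using f \<eta> b by (intro mult_strict_left_mono) auto
  then have "b * f < \<epsilon>" using b by simp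
  then show ?thesis using eq f b by (intro exI[of _ k] exI[of _ m]) auto
qed



theorem mainTheorem6:
  fixes S :: "(int \<times> int) set" and \<theta>s :: real
  assumes fin: "finite S"
    and theta_range: "0 \<le> \<theta>s" "\<theta>s \<le> pi / 2"
    and theta_max: "\<forall>\<theta>. 0 \<le> \<theta> \<and> \<theta> \<le> pi / 2 \<longrightarrow> rho S \<theta> \<le> rho S \<theta>s"
    and nontrivial: "\<exists>(i, j)\<in>S. \<exists>(k, l)\<in>S.
        let a = real_of_int i * sin \<theta>s + real_of_int j * cos \<theta>s;
            b = - (real_of_int k * sin \<theta>s + real_of_int l * cos \<theta>s)
        in a > 0 \<and> b > 0 \<and> a / b \<notin> \<rat>"
    and irrat: "tan \<theta>s \<notin> \<rat>"
  shows "\<not> context_free (walks (halfplane \<theta>s) S)"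
proof
  assume cf: "context_free (walks (halfplane \<theta>s) S)"
  define L where "L = walks (halfplane \<theta>s) S"
  obtain i j k l where ij: "(i, j) \<in> S" and kl: "(k, l) \<in> S"
    and h: "let a = real_of_int i * sin \<theta>s + real_of_int j * cos \<theta>s;
            b = - (real_of_int k * sin \<theta>s + real_of_int l * cos \<theta>s)
        in a > 0 \<and> b > 0 \<and> a / b \<notin> \<rat>"
    using nontrivial by blast
  define A where "A = (i, j)"
  define B where "B = (k, l)"
  define a where "a = pr \<theta>s A"
  define b where "b = - pr \<theta>s B"
  have a0: "a > 0" and b0: "b > 0" and irr: "a / b \<notin> \<rat>"
    using h unfolding Let_def a_def b_def A_def B_def pr_def by auto
  have AS: "A \<in> S" "B \<in> S" using ij kl A_def B_def by auto
  have AB: "A \<noteq> B" using a0 b0 a_def b_def by auto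
  have prB: "pr \<theta>s B = - b" using b_def by simp
  obtain p where pump: "\<forall>z\<in>L. length z > p \<longrightarrow> (\<exists>u v w x y. z = u@v@w@x@y \<and> v@x \<noteq> [] \<and> length (v@x) \<le> p \<and>
     (\<forall>i. u @ concat (replicate i v) @ w @ concat (replicate i x) @ y \<in> L))"
    using cf_pumping[OF cf[folded L_def]] by blast
  define q where "q = Suc p"
  define D where "D = {x \<in> (\<lambda>(j,k). real j * a - real k * b) ` ({..q} \<times> {..q}). 0 < x}"
  have finD: "finite D" unfolding D_def by simp
  have aD: "a \<in> D" unfolding D_def q_def using a0
    by (auto intro!: image_eqI[of _ _ "(1,0)"])
  define \<delta> where "\<delta> = Min D"
  have \<delta>D: "\<delta> \<in> D" unfolding \<delta>_def using finD aD by (intro Min_in) auto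
  have \<delta>0: "\<delta> > 0" using \<delta>D unfolding D_def by auto
  have \<delta>le: "\<And>x. x \<in> D \<Longrightarrow> \<delta> \<le> x" unfolding \<delta>_def using finD by (intro Min_le)
  obtain n m :: nat where nm: "0 < real n * a - real m * b" "real n * a - real m * b < \<delta>"
    using density[OF a0 b0 irr \<delta>0] by blast
  have nmp: "n + m > p"
  proof (rule ccontr)
    assume "\<not> n + m > p"
    then have "n \<le> q" "m \<le> q" unfolding q_def by auto
    then have "real n * a - real m * b \<in> D" unfolding D_def using nm(1)
      by (auto intro!: image_eqI[of _ _ "(n,m)"])
    then show False using \<delta>le nm(2) by fastforce
  qed
  define z where "z = replicate n A @ replicate m B"
  have zS: "set z \<subseteq> {A, B}" unfolding z_def by auto
  have "\<forall>t \<le> length z. proj \<theta>s (take t z) \<ge> 0"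
  proof (intro allI impI)
    fix t assume t: "t \<le> length z"
    show "proj \<theta>s (take t z) \<ge> 0"
    proof (cases "t \<le> n")
      case True
      then have "take t z = replicate t A" unfolding z_def by simp
      then show ?thesis using a0 by (simp add: proj_replicate a_def[symmetric])
    next
      case False
      have tm: "t - n \<le> m" using t unfolding z_def by simp
      have tz: "take t z = replicate n A @ replicate (t - n) B" unfolding z_def using False tm by simp
      have "proj \<theta>s (take t z) = real n * a - real (t - n) * b"
        unfolding tz by (simp add: proj_replicate a_def[symmetric] prB)
      moreover have "real (t - n) * b \<le> real m * b" using tm b0 by (intro mult_right_mono) auto
      ultimately show ?thesis using nm(1) by linarith
    qed
  qed
  moreover have "set z \<subseteq> S" using zS AS by blast
  ultimately have zL: "z \<in> L" unfolding L_def walks_def walk_in_iff by simp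
  have lz: "length z > p" using nmp unfolding z_def by simp
  obtain u v w x y where dec: "z = u@v@w@x@y" "v@x \<noteq> []" "length (v@x) \<le> p"
    and pumped: "\<forall>i. u @ concat (replicate i v) @ w @ concat (replicate i x) @ y \<in> L"
    using pump[rule_format, OF zL lz] by blast
  define R where "R = proj \<theta>s u + proj \<theta>s w + proj \<theta>s y"
  define c where "c = proj \<theta>s v + proj \<theta>s x"
  have pv: "R + real i * c \<ge> 0" for i
  proof -
    have "u @ concat (replicate i v) @ w @ concat (replicate i x) @ y \<in> L" using pumped by blast
    from L_end[OF this[unfolded L_def]]
    have "proj \<theta>s (u @ concat (replicate i v) @ w @ concat (replicate i x) @ y) \<ge> 0" .
    then show ?thesis unfolding R_def c_def by (simp add: proj_rep algebra_simps)
  qed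
  have pz: "proj \<theta>s z = real n * a - real m * b"
    unfolding z_def by (simp add: proj_replicate a_def[symmetric] prB)
  have Rc: "proj \<theta>s z = R + c" unfolding dec(1) R_def c_def by simp
  have c0: "c \<ge> 0"
  proof (rule ccontr)
    assume "\<not> c \<ge> 0"
    then have cn: "c < 0" by simp
    obtain N :: nat where N: "R / (- c) < real N" using reals_Archimedean2 by blast
    have cpos: "- c > 0" using cn by simp
    have "R < real N * (- c)" using N by (subst (asm) pos_divide_less_eq[OF cpos])
    then show False using pv[of N] by simp
  qed
  have R0: "R \<ge> 0" using pv[of 0] by simp
  define vx where "vx = v @ x"
  have vxS: "set vx \<subseteq> {A, B}" using zS dec(1) unfolding vx_def by auto
  have cnt: "proj \<theta>s vx = real (count_list vx A) * pr \<theta>s A + real (count_list vx B) * pr \<theta>s B \<and>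
    length vx = count_list vx A + count_list vx B" using proj_count[OF vxS AB] .
  have cv: "c = real (count_list vx A) * a - real (count_list vx B) * b"
    using cnt unfolding c_def vx_def a_def prB by simp
  have lvx: "length vx \<le> p" "length vx > 0" using dec(2,3) unfolding vx_def by auto
  have cq: "count_list vx A \<le> q" "count_list vx B \<le> q" using cnt lvx unfolding q_def by auto
  show False
  proof (cases "c > 0")
    case True
    then have "c \<in> D" unfolding D_def cv using cq
      by (auto intro!: image_eqI[of _ _ "(count_list vx A, count_list vx B)"])
    then have "\<delta> \<le> c" by (rule \<delta>le)
    moreover have "c \<le> real n * a - real m * b" using pz Rc R0 by linarith
    ultimately show False using nm(2) by linarith
  next
    case False
    then have c00: "c = 0" using c0 by simp
    then have eqab: "real (count_list vx A) * a = real (count_list vx B) * b" using cv by simp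
    show False
    proof (cases "count_list vx A = 0")
      case True
      then have "count_list vx B = 0" using eqab b0 by simp
      then show False using True cnt lvx by simp
    next
      case False
      then have "a / b = real (count_list vx B) / real (count_list vx A)"
        using eqab a0 b0 by (simp add: field_simps)
      moreover have "real (count_list vx B) / real (count_list vx A) \<in> \<rat>"
        by (intro Rats_divide Rats_of_nat)
      ultimately show False using irr by simp
    qed
  qed
qed

end
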